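(* Fix any total budget $\mathrm{TB}\in\mathbb N_0$. For every integer $n\in\mathbb Z$, the integer game form $n$ satisfies $n=\{n-1\mid n+1\}$, where $n-1$ and $n+1$ denote the corresponding integer game forms.
   Context: Game forms are defined recursively: $G=\{G^{\mathcal L}\mid G^{\mathcal R}\}$ with finite sets of Left and Right options, and finite birthday. Integer game forms: $0=\{\varnothing\mid\varnothing\}$; for $n\in\mathbb N$, $n=\{n-1\mid\varnothing\}$ and $-n=\bar n=\{\varnothing\mid -(n-1)\}$, where the conjugate is $\bar G=\{\overline{G^{\mathcal R}}\mid\overline{G^{\mathcal L}}\}$. The budget set for total budget $\mathrm{TB}$ is $\mathcal B=\{0,\dots,\mathrm{TB},\hat 0,\dots,\widehat{\mathrm{TB}}\}$: state $p$ (resp. $\hat p$) means Left holds $p$ dollars and Right holds $\mathrm{TB}-p$, and Right (resp. Left) holds the tie-breaking marker. Play of $(G,\tilde p)$: at every position (terminal ones included) both players bid simultaneously, Left $\ell\in\{0,\dots,p\}$, Right $r\in\{0,\dots,\mathrm{TB}-p\}$. If Left holds the marker (state $\hat p$): if $\ell>r$ Left moves to $(G^L,\widehat{p-\ell})$, or, including the marker (allowed when $\ell\ge r$), to $(G^L,p-\ell)$; if $\ell=r$ Left wins, the marker passes to Right, play continues at $(G^L,p-\ell)$; if $\ell<r$ Right moves to $(G^R,\widehat{p+r})$. Symmetrically when Right holds the marker (state $p$): if $r>\ell$ Right moves to $(G^R,p+r)$ or, including the marker, to $(G^R,\widehat{p+r})$; if $r=\ell$ Right wins, the marker passes to Left,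 play continues at $(G^R,\widehat{p+r})$; if $r<\ell$ Left moves to $(G^L,p-\ell)$. A player who wins a bid but has no option loses. $o(G,\tilde p)\in\{\mathrm L,\mathrm R\}$ is the winner under optimal play; $\mathrm L>\mathrm R$. Disjunctive sum $G+H=\{G^{\mathcal L}+H,G+H^{\mathcal L}\mid G^{\mathcal R}+H,G+H^{\mathcal R}\}$. $G\ge H$ means $o(G+X,\tilde p)\ge o(H+X,\tilde p)$ for all game forms $X$ and all $\tilde p\in\mathcal B$; $G=H$ means $G\ge H$ and $H\ge G$. *)

theory Defs
  imports Main "HOL-Library.FSet"
begin

text \<open>Game forms: finite sets of Left and Right options; finite birthday is automatic
  from the inductive datatype.\<close>
datatype game = Game "game fset" "game fset"

primrec conj :: "game \<Rightarrow> game" where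
  "conj (Game GL GR) = Game (fimage conj GR) (fimage conj GL)"

primrec nat_game :: "nat \<Rightarrow> game" where
  "nat_game 0 = Game {||} {||}"
| "nat_game (Suc k) = Game {|nat_game k|} {||}"

definition int_game :: "int \<Rightarrow> game" where
  "int_game n = (if 0 \<le> n then nat_game (nat n) else conj (nat_game (nat (- n))))"

text \<open>Disjunctive sum. plus_aux FL FR H computes G + H where FL, FR are the functions
  (\<lambda>X. G' + X) for the Left resp. Right options G' of G.\<close>
primrec plus_aux :: "(game \<Rightarrow> game) fset \<Rightarrow> (game \<Rightarrow> game) fset \<Rightarrow> game \<Rightarrow> game" where
  "plus_aux FL FR (Game HL HR) =
     Game (fimage (\<lambda>f. f (Game HL HR)) FL |\<union>| fimage (plus_aux FL FR) HL)
          (fimage (\<lambda>f. f (Game HL HR)) FR |\<union>| fimage (plus_aux FL FR) HR)"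

primrec gplus :: "game \<Rightarrow> game \<Rightarrow> game" where
  "gplus (Game GL GR) = plus_aux (fimage gplus GL) (fimage gplus GR)"

text \<open>A state (p, h) with p \<le> TB: Left holds p dollars,
  Right holds TB - p; h = True means Left holds the tie-breaking marker (state \<hat>p),
  h = False means Right holds it (state p). lwins TB G s holds iff o(G,s) = L,
  i.e. Left has a bid such that for every Right bid Left wins under optimal continuation.\<close>
primrec lwins :: "nat \<Rightarrow> game \<Rightarrow> nat \<times> bool \<Rightarrow> bool" where
  "lwins TB (Game GL GR) = (\<lambda>(p, h).
     \<exists>l \<le> p. \<forall>r \<le> TB - p.
       (if h then
          (if r < l then (\<exists>f |\<in>| fimage (lwins TB) GL. f (p - l, True) \<or> f (p - l, False))
           else if l = r then (\<exists>f |\<in>| fimage (lwins TB) GL. f (p - l, False))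
           else (\<forall>f |\<in>| fimage (lwins TB) GR. f (p + r, True)))
        else
          (if l < r then (\<forall>f |\<in>| fimage (lwins TB) GR. f (p + r, False) \<and> f (p + r, True))
           else if l = r then (\<forall>f |\<in>| fimage (lwins TB) GR. f (p + r, True))
           else (\<exists>f |\<in>| fimage (lwins TB) GL. f (p - l, False)))))"

definition game_ge :: "nat \<Rightarrow> game \<Rightarrow> game \<Rightarrow> bool" where
  "game_ge TB G H = (\<forall>X p h. p \<le> TB \<longrightarrow> lwins TB (gplus H X) (p, h) \<longrightarrow> lwins TB (gplus G X) (p, h))"

definition game_eq :: "nat \<Rightarrow> game \<Rightarrow> game \<Rightarrow> bool" where
  "game_eq TB G H = (game_ge TB G H \<and> game_ge TB H G)"

end

theory Submission
  imports Defs
begin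

primrec lefts :: "game \<Rightarrow> game fset" where "lefts (Game L R) = L"
primrec rights :: "game \<Rightarrow> game fset" where "rights (Game L R) = R"

definition branch :: "(nat \<Rightarrow> bool \<Rightarrow> bool) \<Rightarrow> (nat \<Rightarrow> bool \<Rightarrow> bool) \<Rightarrow> nat \<Rightarrow> bool \<Rightarrow> nat \<Rightarrow> nat \<Rightarrow> bool" where
"branch PL PR p h l r = (if h then (if r < l then PL (p-l) True \<or> PL (p-l) False
   else if l = r then PL (p-l) False else PR (p+r) True)
  else (if l < r then PR (p+r) False \<and> PR (p+r) True else if l = r then PR (p+r) True else PL (p-l) False))"

definition sle :: "nat \<Rightarrow> bool \<Rightarrow> nat \<Rightarrow> bool \<Rightarrow> bool" where
"sle a b c d = (a < c \<or> (a = c \<and> (b \<longrightarrow> d)))"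

lemma fbex_img: "(\<exists>f|\<in>|fimage F A. P f) = (\<exists>a|\<in>|A. P (F a))" by auto
lemma fball_img: "(\<forall>f|\<in>|fimage F A. P f) = (\<forall>a|\<in>|A. P (F a))" by auto

lemma fbex_disj: "(\<exists>a|\<in>|A. P a \<or> Q a) = ((\<exists>a|\<in>|A. P a) \<or> (\<exists>a|\<in>|A. Q a))" by auto
lemma fball_conj: "(\<forall>a|\<in>|A. P a \<and> Q a) = ((\<forall>a|\<in>|A. P a) \<and> (\<forall>a|\<in>|A. Q a))" by auto

lemma lw_char: "lwins TB G (p,h) = (\<exists>l\<le>p. \<forall>r\<le>TB-p. branch (\<lambda>a b. \<exists>g|\<in>|lefts G. lwins TB g (a,b))
   (\<lambda>a b. \<forall>g|\<in>|rights G. lwins TB g (a,b)) p h l r)"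
  by (cases G) (simp only: lwins.simps lefts.simps rights.simps fbex_img fball_img branch_def split_conv fbex_disj fball_conj)

lemma gplus_simp: "gplus (Game GL GR) (Game HL HR) =
  Game (fimage (\<lambda>g. gplus g (Game HL HR)) GL |\<union>| fimage (gplus (Game GL GR)) HL)
       (fimage (\<lambda>g. gplus g (Game HL HR)) GR |\<union>| fimage (gplus (Game GL GR)) HR)"
  by (simp add: fset.map_comp o_def)

lemma lefts_plus: "g |\<in>| lefts (gplus G H) \<longleftrightarrow> (\<exists>x|\<in>|lefts G. g = gplus x H) \<or> (\<exists>x|\<in>|lefts H. g = gplus G x)"
  by (cases G; cases H) (auto simp only: gplus_simp lefts.simps fimage_iff funion_iff)

lemma rights_plus: "g |\<in>| rights (gplus G H) \<longleftrightarrow> (\<exists>x|\<in>|rights G. g = gplus x H) \<or> (\<exists>x|\<in>|rights H. g = gplus G x)"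
  by (cases G; cases H) (auto simp only: gplus_simp rights.simps fimage_iff funion_iff)

lemma conj0: "conj (Game {||} {||}) = Game {||} {||}" by simp

lemma lefts_int: "lefts (int_game m) = (if 1 \<le> m then {|int_game (m-1)|} else {||})"
proof (cases "0 \<le> m")
  case True
  then show ?thesis
  proof (cases "m = 0")
    case False
    with True obtain k where "nat m = Suc k" by (metis gr0_implies_Suc nat_0_iff not_le zero_less_iff_neq_zero order.order_iff_strict)
    with True False show ?thesis by (simp add: int_game_def) (metis nat_diff_distrib' nat_int nat_one_as_int Suc_eq_plus1 add_diff_cancel_right' of_nat_Suc order.refl int_ops(2) zero_le_one)
  qed (simp add: int_game_def)
next
  case False
  then obtain k where "nat (-m) = Suc k" by (metis gr0_implies_Suc neg_0_less_iff_less zero_less_nat_eq not_le)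
  with False show ?thesis by (simp add: int_game_def)
qed

lemma sim0:
  assumes B: "\<forall>r\<le>TB-p. branch PL PR p h l r"
  and HL: "\<And>a b. sle a b p h \<Longrightarrow> PL a b \<Longrightarrow> QL a b"
  and HR: "\<And>a b. sle p h a b \<Longrightarrow> a \<le> TB \<Longrightarrow> PR a b \<Longrightarrow> QR a b"
  and "p \<le> TB"
  shows "\<forall>r\<le>TB-p. branch QL QR p h l r"
proof (intro allI impI)
  fix r assume r: "r \<le> TB - p"
  have b: "branch PL PR p h l r" using B r by blast
  consider (a) "h" "r < l" | (b) "h" "r = l" | (c) "h" "l < r" | (d) "\<not>h" "l < r" | (e) "\<not>h" "l = r" | (f) "\<not>h" "r < l"
    by fastforce
  then show "branch QL QR p h l r"
  proof cases
    case a
    then have "sle (p-l) True p h" "sle (p-l) False p h" unfolding sle_def by auto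
    then show ?thesis using a b HL unfolding branch_def by auto
  next
    case b
    then have "sle (p-l) False p h" unfolding sle_def by auto
    then show ?thesis using b \<open>branch PL PR p h l r\<close> HL unfolding branch_def by auto
  next
    case c
    then have "sle p h (p+r) True" "p+r \<le> TB" using r assms(4) unfolding sle_def by auto
    then show ?thesis using c b HR unfolding branch_def by auto
  next
    case d
    then have "sle p h (p+r) True" "sle p h (p+r) False" "p+r \<le> TB" using r assms(4) unfolding sle_def by auto
    then show ?thesis using d b HR unfolding branch_def by auto
  next
    case e
    then have "sle p h (p+r) True" "p+r \<le> TB" using r assms(4) unfolding sle_def by auto
    then show ?thesis using e b HR unfolding branch_def by auto
  next
    case f
    then have "sle (p-l) False p h" unfolding sle_def by auto
    then show ?thesis using f b HL unfolding branch_def by auto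
  qed
qed

lemma simE:
  assumes B: "\<forall>r\<le>TB-p. branch PL PR p h l r" and lp: "l \<le> p" and pq: "sle p h q h2" and q: "q \<le> TB"
  and HL: "\<And>a b c d. sle a b c d \<Longrightarrow> c \<le> TB \<Longrightarrow> PL a b \<Longrightarrow> QL c d"
  and HR: "\<And>a b c d. sle a b c d \<Longrightarrow> c \<le> TB \<Longrightarrow> PR a b \<Longrightarrow> QR c d"
  and SP: "\<not> h \<and> l = 0 \<and> (h2 \<or> p < q) \<Longrightarrow> QL p False"
  shows "\<exists>l'\<le>q. \<forall>r'\<le>TB-q. branch QL QR q h2 l' r'"
proof (cases "\<not> h \<and> l = 0 \<and> (h2 \<or> p < q)")
  case True
  have QLp: "QL p False" using SP True by blast
  show ?thesis
  proof (intro exI[of _ "q-p"] conjI allI impI)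
    show "q - p \<le> q" by simp
    fix r' assume r': "r' \<le> TB - q"
    have pq': "p \<le> q" using pq unfolding sle_def by auto
    have b: "branch PL PR p h l r'" using B r' pq' by auto
    have qr: "q + r' \<le> TB" using r' q by simp
    have hT: "PR (p+r') True \<Longrightarrow> QR (q+r') True"
      using HR[of "p+r'" True "q+r'" True] qr pq' unfolding sle_def by force
    have hF: "p < q \<Longrightarrow> PR (p+r') True \<Longrightarrow> QR (q+r') False"
      using HR[of "p+r'" True "q+r'" False] qr unfolding sle_def by force
    show "branch QL QR q h2 (q-p) r'"
      using b True QLp hT hF pq'
      unfolding branch_def by (auto split: if_splits)
  qed
next
  case False
  define e where "e = (if h \<and> \<not> h2 then 1 else (0::nat))"
  have pq': "p \<le> q" and e1: "h \<and> \<not> h2 \<Longrightarrow> p < q" using pq unfolding sle_def by auto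
  have Bi: "\<And>r. r \<le> TB - p \<Longrightarrow> branch PL PR p h l r" using B by blast
  have Lp: "l \<le> TB - q \<Longrightarrow> l \<le> TB - p" using pq' by simp
  show ?thesis
  proof (intro exI[of _ "l + (q-p) - e"] conjI allI impI)
    show "l + (q-p) - e \<le> q" using lp pq' by simp
    fix r' assume r': "r' \<le> TB - q"
    have qr: "q + r' \<le> TB" using r' q by simp
    have br': "branch PL PR p h l r'" using Bi r' pq' by auto
    have HRT: "PR (p+r') True \<Longrightarrow> QR (q+r') True"
      using HR[of "p+r'" True "q+r'" True] qr pq' unfolding sle_def by force
    consider (TT) "h" "h2" | (FT) "\<not>h" "h2" | (FF) "\<not>h" "\<not>h2" | (TF) "h" "\<not>h2" by blast
    then show "branch QL QR q h2 (l + (q-p) - e) r'"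
    proof cases
      case TT
      then have e0: "e = 0" unfolding e_def by simp
      consider "r' < l + (q-p)" | "r' = l + (q-p)" | "r' > l + (q-p)" by linarith
      then show ?thesis
      proof cases
        case 1
        have b0: "branch PL PR p h l 0" using Bi by simp
        show ?thesis
        proof (cases "l = 0")
          case True
          then have "PL p False" using b0 TT unfolding branch_def by simp
          then have "QL (q - (l + (q-p) - e)) False" using HL[of p False p False] True e0 pq' q unfolding sle_def by simp
          then show ?thesis using 1 TT e0 unfolding branch_def by simp
        next
          case False
          then have "PL (p-l) True \<or> PL (p-l) False" using b0 TT unfolding branch_def by simp
          moreover have "p - l \<le> TB" using pq' q by simp
          ultimately have "QL (p-l) True \<or> QL (p-l) False" using HL[of "p-l" True "p-l" True] HL[of "p-l" False "p-l" False] unfolding sle_def by auto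
          moreover have "q - (l + (q-p) - e) = p - l" using e0 pq' lp by simp
          ultimately show ?thesis using 1 TT e0 unfolding branch_def by simp
        qed
      next
        case 2
        have "l \<le> TB - p" using 2 r' pq' by simp
        then have "PL (p-l) False" using Bi[of l] TT unfolding branch_def by simp
        moreover have "p - l \<le> TB" using pq' q by simp
        ultimately have "QL (p-l) False" using HL[of "p-l" False "p-l" False] unfolding sle_def by auto
        moreover have "q - (l + (q-p) - e) = p - l" using e0 pq' lp by simp
        ultimately show ?thesis using 2 TT e0 unfolding branch_def by simp
      next
        case 3
        then have "PR (p+r') True" using br' TT unfolding branch_def by simp
        then show ?thesis using HRT 3 TT e0 unfolding branch_def by simp
      qed
    next
      case FT
      then have e0: "e = 0" unfolding e_def by simp
      have l1: "l \<ge> 1" using False FT by auto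
      have "PL (p-l) False" using Bi[of 0] FT l1 unfolding branch_def by simp
      moreover have "p - l \<le> TB" using pq' q by simp
      ultimately have QLF: "QL (p-l) False" using HL[of "p-l" False "p-l" False] unfolding sle_def by auto
      have qe: "q - (l + (q-p) - e) = p - l" using e0 pq' lp by simp
      show ?thesis
      proof (cases "r' \<le> l + (q-p)")
        case True
        then show ?thesis using QLF qe FT e0 unfolding branch_def by auto
      next
        case False
        then have "PR (p+r') True" using br' FT unfolding branch_def by simp
        then show ?thesis using HRT False FT e0 unfolding branch_def by simp
      qed
    next
      case FF
      then have e0: "e = 0" unfolding e_def by simp
      have qe: "q - (l + (q-p) - e) = p - l" using e0 pq' lp by simp
      consider "r' < l + (q-p)" | "r' = l + (q-p)" | "r' > l + (q-p)" by linarith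
      then show ?thesis
      proof cases
        case 1
        have l1: "l \<ge> 1" using False FF 1 pq' by auto
        have "PL (p-l) False" using Bi[of 0] FF l1 unfolding branch_def by simp
        moreover have "p - l \<le> TB" using pq' q by simp
        ultimately have QLF: "QL (p-l) False" using HL[of "p-l" False "p-l" False] unfolding sle_def by auto
        then show ?thesis using 1 qe FF e0 unfolding branch_def by auto
      next
        case 2
        then have "PR (p+r') True" using br' FF unfolding branch_def by (auto split: if_splits)
        then show ?thesis using HRT 2 FF e0 unfolding branch_def by simp
      next
        case 3
        then have a1: "PR (p+r') True" and a2: "PR (p+r') False" using br' FF unfolding branch_def by auto
        have "QR (q+r') False" using HR[of "p+r'" False "q+r'" False] a2 qr pq' unfolding sle_def by force
        then show ?thesis using HRT a1 3 FF e0 unfolding branch_def by simp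
      qed
    next
      case TF
      then have e0: "e = 1" and pq2: "p < q" unfolding e_def using e1 by auto
      have qe: "q - (l + (q-p) - e) = p - l + 1" using e0 pq2 lp by simp
      consider "r' < l + (q-p) - 1" | "r' = l + (q-p) - 1" | "r' > l + (q-p) - 1" by linarith
      then show ?thesis
      proof cases
        case 1
        have "PL (p-l) True \<or> PL (p-l) False" using Bi[of 0] TF unfolding branch_def by (auto split: if_splits)
        moreover have "p - l + 1 \<le> TB" using pq2 q lp by simp
        ultimately have "QL (p-l+1) False" using HL[of "p-l" True "p-l+1" False] HL[of "p-l" False "p-l+1" False] unfolding sle_def by auto
        then show ?thesis using 1 qe TF e0 lp unfolding branch_def by (auto simp: Suc_diff_le)
      next
        case 2
        show ?thesis
        proof (cases "r' > l")
          case True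
          then have "PR (p+r') True" using br' TF unfolding branch_def by simp
          then have "QR (q+r') True" using HR[of "p+r'" True "q+r'" True] qr pq2 unfolding sle_def by force
          then show ?thesis using 2 TF e0 unfolding branch_def by auto
        next
          case False
          then have rl: "r' = l" "q = p + 1" using 2 lp pq2 by auto
          then have "l + 1 \<le> TB - p" using r' q rl by simp
          then have "PR (p+(l+1)) True" using Bi[of "l+1"] TF unfolding branch_def by simp
          then have "QR (q+r') True" using HR[of "p+(l+1)" True "q+r'" True] qr rl unfolding sle_def by force
          then show ?thesis using 2 TF e0 unfolding branch_def by auto
        qed
      next
        case 3
        then have "PR (p+r') True" using br' TF pq2 unfolding branch_def by simp
        then have "QR (q+r') True" "QR (q+r') False" using HR[of "p+r'" True "q+r'" True] HR[of "p+r'" True "q+r'" False] qr pq2 unfolding sle_def by force+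
        then show ?thesis using 3 TF e0 unfolding branch_def by auto
      qed
    qed
  qed
qed


lemma rights_nat: "rights (nat_game k) = {||}" by (cases k) auto

lemma rights_int: "rights (int_game m) = (if m \<le> -1 then {|int_game (m+1)|} else {||})"
proof (cases "0 \<le> m")
  case True
  then show ?thesis by (simp add: int_game_def rights_nat)
next
  case False
  then obtain k where k: "nat (-m) = Suc k" by (metis gr0_implies_Suc neg_0_less_iff_less zero_less_nat_eq not_le)
  have "conj (nat_game k) = int_game (m+1)"
  proof (cases "k = 0")
    case True
    then have "m = -1" using k by simp
    then show ?thesis using True by (simp add: int_game_def)
  next
    case False
    then have "m + 1 < 0" "nat (-(m+1)) = k" using k by auto
    then show ?thesis by (simp add: int_game_def)
  qed
  then show ?thesis using False k by (simp add: int_game_def)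
qed

abbreviation PLg where "PLg TB G \<equiv> (\<lambda>a b. \<exists>g|\<in>|lefts G. lwins TB g (a,b))"
abbreviation PRg where "PRg TB G \<equiv> (\<lambda>a b. \<forall>g|\<in>|rights G. lwins TB g (a,b))"

lemma lw_charE: "lwins TB G (p,h) \<Longrightarrow> \<exists>l\<le>p. \<forall>r\<le>TB-p. branch (PLg TB G) (PRg TB G) p h l r"
  using lw_char by blast

lemma E_lemma: "\<forall>m p h q h2. sle p h q h2 \<longrightarrow> q \<le> TB \<longrightarrow> lwins TB (gplus (int_game m) X) (p,h)
   \<longrightarrow> lwins TB (gplus (int_game (m+1)) X) (q,h2)"
proof (induction X)
  case (Game XL XR)
  let ?X = "Game XL XR"
  have main: "\<forall>m. nat \<bar>m\<bar> = k \<longrightarrow> (\<forall>p h q h2. sle p h q h2 \<longrightarrow> q \<le> TB \<longrightarrow> lwins TB (gplus (int_game m) ?X) (p,h)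
   \<longrightarrow> lwins TB (gplus (int_game (m+1)) ?X) (q,h2))" for k
  proof (induction k rule: less_induct)
    case (less k)
    show ?case
    proof (intro allI impI)
      fix m p h q h2 assume mk: "nat \<bar>m\<bar> = k" and pq: "sle p h q h2" and q: "q \<le> TB"
        and A: "lwins TB (gplus (int_game m) ?X) (p,h)"
      define GA where "GA = gplus (int_game m) ?X"
      define GB where "GB = gplus (int_game (m+1)) ?X"
      from A obtain l where lp: "l \<le> p" and Bl: "\<forall>r\<le>TB-p. branch (PLg TB GA) (PRg TB GA) p h l r"
        using lw_charE unfolding GA_def by blast
      have pq': "p \<le> q" using pq unfolding sle_def by auto
      show "lwins TB GB (q,h2)"
      proof (cases "\<not>h \<and> l = 0 \<and> (h2 \<or> p<q) \<and> m < 0")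
        case True
        have GBr: "GB |\<in>| rights GA" unfolding GA_def GB_def using True
          by (simp add: rights_plus rights_int)
        have "q - p \<le> TB - p" using q by simp
        then have bb: "branch (PLg TB GA) (PRg TB GA) p h l (q-p)" using Bl by blast
        have "PRg TB GA q h2"
        proof (cases "p < q")
          case True
          with bb \<open>\<not>h \<and> l = 0 \<and> (h2 \<or> p<q) \<and> m < 0\<close> pq' show ?thesis unfolding branch_def
            by (cases h2) auto
        next
          case False
          then have "q = p" "h2" using pq' \<open>\<not>h \<and> l = 0 \<and> (h2 \<or> p<q) \<and> m < 0\<close> by auto
          with bb \<open>\<not>h \<and> l = 0 \<and> (h2 \<or> p<q) \<and> m < 0\<close> show ?thesis unfolding branch_def by auto
        qed
        then show ?thesis using GBr by auto
      next
        case False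
        show ?thesis unfolding lw_char[of TB GB q h2]
        proof (rule simE[OF Bl lp pq q])
          fix a b c d assume abcd: "sle a b c d" "c \<le> TB" and PL: "PLg TB GA a b"
          then obtain g where g: "g |\<in>| lefts GA" "lwins TB g (a,b)" by blast
          from g(1) consider (i) "1 \<le> m" "g = gplus (int_game (m-1)) ?X" | (ii) x where "x |\<in>| XL" "g = gplus (int_game m) x"
            unfolding GA_def by (auto simp: lefts_plus lefts_int split: if_splits)
          then show "PLg TB GB c d"
          proof cases
            case i
            have "nat \<bar>m-1\<bar> < k" using i mk by simp
            then have "lwins TB (gplus (int_game (m-1+1)) ?X) (c,d)" using less.IH[of "nat \<bar>m-1\<bar>"] abcd g(2) i by blast
            moreover have "gplus (int_game (m-1+1)) ?X |\<in>| lefts GB" unfolding GB_def using i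
              by (simp add: lefts_plus lefts_int)
            ultimately show ?thesis by blast
          next
            case ii
            have "lwins TB (gplus (int_game (m+1)) x) (c,d)" using Game.IH(1)[OF ii(1)] abcd g(2) ii(2) by blast
            moreover have "gplus (int_game (m+1)) x |\<in>| lefts GB" unfolding GB_def using ii
              by (auto simp add: lefts_plus)
            ultimately show ?thesis by blast
          qed
        next
          fix a b c d assume abcd: "sle a b c d" "c \<le> TB" and PR: "PRg TB GA a b"
          show "PRg TB GB c d"
          proof (intro ballI)
            fix g' assume g': "g' |\<in>| rights GB"
            then consider (i) "m + 1 \<le> -1" "g' = gplus (int_game (m+1+1)) ?X" | (ii) x where "x |\<in>| XR" "g' = gplus (int_game (m+1)) x"
              unfolding GB_def by (auto simp: rights_plus rights_int split: if_splits)
            then show "lwins TB g' (c,d)"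
            proof cases
              case i
              have "gplus (int_game (m+1)) ?X |\<in>| rights GA" unfolding GA_def using i
                by (simp add: rights_plus rights_int)
              then have w: "lwins TB (gplus (int_game (m+1)) ?X) (a,b)" using PR by blast
              have "nat \<bar>m+1\<bar> < k" using i mk by simp
              then show ?thesis using less.IH[of "nat \<bar>m+1\<bar>"] abcd w i by blast
            next
              case ii
              have "gplus (int_game m) x |\<in>| rights GA" unfolding GA_def using ii
                by (auto simp add: rights_plus)
              then have w: "lwins TB (gplus (int_game m) x) (a,b)" using PR by blast
              show ?thesis using Game.IH(2)[OF ii(1)] abcd w ii(2) by blast
            qed
          qed
        next
          assume sp: "\<not> h \<and> l = 0 \<and> (h2 \<or> p < q)"
          then have m0: "0 \<le> m" using False by auto
          have "GA |\<in>| lefts GB" unfolding GA_def GB_def using m0 by (simp add: lefts_plus lefts_int)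
          moreover have "lwins TB GA (p, False)" using A sp unfolding GA_def by simp
          ultimately show "PLg TB GB p False" by blast
        qed
      qed
    qed
  qed
  then show ?case by blast
qed


lemma P2: "\<forall>p h. p \<le> TB \<longrightarrow> lwins TB (gplus (int_game n) X) (p,h)
   \<longrightarrow> lwins TB (gplus (Game {|int_game (n - 1)|} {|int_game (n + 1)|}) X) (p,h)"
proof (induction X)
  case (Game XL XR)
  let ?X = "Game XL XR"
  let ?K = "Game {|int_game (n - 1)|} {|int_game (n + 1)|}"
  show ?case
  proof (intro allI impI)
    fix p h assume pT: "p \<le> TB" and A: "lwins TB (gplus (int_game n) ?X) (p,h)"
    define GA where "GA = gplus (int_game n) ?X"
    define GB where "GB = gplus ?K ?X"
    from A obtain l where lp: "l \<le> p" and Bl: "\<forall>r\<le>TB-p. branch (PLg TB GA) (PRg TB GA) p h l r"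
      using lw_charE unfolding GA_def by blast
    show "lwins TB GB (p,h)" unfolding lw_char[of TB GB p h]
    proof (intro exI conjI)
      show "l \<le> p" by (rule lp)
      show "\<forall>r\<le>TB - p. branch (PLg TB GB) (PRg TB GB) p h l r"
      proof (rule sim0[OF Bl _ _ pT])
        fix a b assume ab: "sle a b p h" and PL: "PLg TB GA a b"
        then obtain g where g: "g |\<in>| lefts GA" "lwins TB g (a,b)" by blast
        have aT: "a \<le> TB" using ab pT unfolding sle_def by auto
        from g(1) consider (i) "1 \<le> n" "g = gplus (int_game (n-1)) ?X" | (ii) x where "x |\<in>| XL" "g = gplus (int_game n) x"
          unfolding GA_def by (auto simp: lefts_plus lefts_int split: if_splits)
        then show "PLg TB GB a b"
        proof cases
          case i
          have "g |\<in>| lefts GB" unfolding GB_def using i by (simp add: lefts_plus)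
          then show ?thesis using g(2) by blast
        next
          case ii
          have "lwins TB (gplus ?K x) (a,b)" using Game.IH(1)[OF ii(1)] aT g(2) ii(2) by blast
          moreover have "gplus ?K x |\<in>| lefts GB" unfolding GB_def using ii by (auto simp add: lefts_plus)
          ultimately show ?thesis by blast
        qed
      next
        fix a b assume ab: "sle p h a b" and aT: "a \<le> TB" and PR: "PRg TB GA a b"
        show "PRg TB GB a b"
        proof (intro ballI)
          fix g' assume g': "g' |\<in>| rights GB"
          then consider (i) "g' = gplus (int_game (n+1)) ?X" | (ii) x where "x |\<in>| XR" "g' = gplus ?K x"
            unfolding GB_def by (auto simp: rights_plus)
          then show "lwins TB g' (a,b)"
          proof cases
            case i
            show ?thesis
            proof (cases "n \<le> -1")
              case True
              have "g' |\<in>| rights GA" unfolding GA_def using i True by (simp add: rights_plus rights_int)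
              then show ?thesis using PR by blast
            next
              case False
              show ?thesis using E_lemma[of TB ?X] ab aT A i by blast
            qed
          next
            case ii
            have "gplus (int_game n) x |\<in>| rights GA" unfolding GA_def using ii by (auto simp add: rights_plus)
            then have w: "lwins TB (gplus (int_game n) x) (a,b)" using PR by blast
            show ?thesis using Game.IH(2)[OF ii(1)] aT w ii(2) by blast
          qed
        qed
      qed
    qed
  qed
qed

lemma P1: "\<forall>p h. p \<le> TB \<longrightarrow> lwins TB (gplus (Game {|int_game (n - 1)|} {|int_game (n + 1)|}) X) (p,h)
   \<longrightarrow> lwins TB (gplus (int_game n) X) (p,h)"
proof (induction X)
  case (Game XL XR)
  let ?X = "Game XL XR"
  let ?K = "Game {|int_game (n - 1)|} {|int_game (n + 1)|}"
  show ?case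
  proof (intro allI impI)
    fix p h assume pT: "p \<le> TB" and A: "lwins TB (gplus ?K ?X) (p,h)"
    define GA where "GA = gplus ?K ?X"
    define GB where "GB = gplus (int_game n) ?X"
    show "lwins TB GB (p,h)"
    proof (cases "\<exists>a b. sle a b p h \<and> lwins TB (gplus (int_game (n-1)) ?X) (a,b)")
      case True
      then obtain a b where "sle a b p h" "lwins TB (gplus (int_game (n-1)) ?X) (a,b)" by blast
      then have "lwins TB (gplus (int_game (n-1+1)) ?X) (p,h)" using E_lemma[of TB ?X] pT by blast
      then show ?thesis unfolding GB_def by simp
    next
      case False
      from A obtain l where lp: "l \<le> p" and Bl: "\<forall>r\<le>TB-p. branch (PLg TB GA) (PRg TB GA) p h l r"
        using lw_charE unfolding GA_def by blast
      show "lwins TB GB (p,h)" unfolding lw_char[of TB GB p h]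
      proof (intro exI conjI)
        show "l \<le> p" by (rule lp)
        show "\<forall>r\<le>TB - p. branch (PLg TB GB) (PRg TB GB) p h l r"
        proof (rule sim0[OF Bl _ _ pT])
          fix a b assume ab: "sle a b p h" and PL: "PLg TB GA a b"
          then obtain g where g: "g |\<in>| lefts GA" "lwins TB g (a,b)" by blast
          have aT: "a \<le> TB" using ab pT unfolding sle_def by auto
          from g(1) consider (i) "g = gplus (int_game (n-1)) ?X" | (ii) x where "x |\<in>| XL" "g = gplus ?K x"
            unfolding GA_def by (auto simp: lefts_plus)
          then show "PLg TB GB a b"
          proof cases
            case i
            then show ?thesis using False ab g(2) by blast
          next
            case ii
            have "lwins TB (gplus (int_game n) x) (a,b)" using Game.IH(1)[OF ii(1)] aT g(2) ii(2) by blast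
            moreover have "gplus (int_game n) x |\<in>| lefts GB" unfolding GB_def using ii by (auto simp add: lefts_plus)
            ultimately show ?thesis by blast
          qed
        next
          fix a b assume ab: "sle p h a b" and aT: "a \<le> TB" and PR: "PRg TB GA a b"
          show "PRg TB GB a b"
          proof (intro ballI)
            fix g' assume g': "g' |\<in>| rights GB"
            then consider (i) "n \<le> -1" "g' = gplus (int_game (n+1)) ?X" | (ii) x where "x |\<in>| XR" "g' = gplus (int_game n) x"
              unfolding GB_def by (auto simp: rights_plus rights_int split: if_splits)
            then show "lwins TB g' (a,b)"
            proof cases
              case i
              have "g' |\<in>| rights GA" unfolding GA_def using i by (simp add: rights_plus)
              then show ?thesis using PR by blast
            next
              case ii
              have "gplus ?K x |\<in>| rights GA" unfolding GA_def using ii by (auto simp add: rights_plus)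
              then have w: "lwins TB (gplus ?K x) (a,b)" using PR by blast
              show ?thesis using Game.IH(2)[OF ii(1)] aT w ii(2) by blast
            qed
          qed
        qed
      qed
    qed
  qed
qed

theorem mainTheorem16:
  fixes TB :: nat and n :: int
  shows "game_eq TB (int_game n) (Game {|int_game (n - 1)|} {|int_game (n + 1)|})"
  unfolding game_eq_def game_ge_def using P1 P2 by blast

end
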